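(* Let $0\neq h\in\mathbb{F}[x]$ and regard $A_h\subseteq A_1$ via $x\mapsto x$, $\hat y\mapsto yh$. (1) If $\mathrm{char}(\mathbb{F})=0$, then the center $Z(A_h)$ is $\mathbb{F}1$. (2) If $\mathrm{char}(\mathbb{F})=p>0$, then $x^p$ and $h^py^p$ are algebraically independent and $Z(A_h)=\mathbb{F}[x^p,h^py^p]$ is a polynomial algebra in these two elements. Moreover $h$ divides $\delta^p(x)$ in $\mathbb{F}[x]$, and $$h^py^p=y^ph^p=\hat y(\hat y+h')(\hat y+2h')\cdots(\hat y+(p-1)h')=\hat y^p-\frac{\delta^p(x)}{h}\,\hat y.$$
   Context: For $h\in\mathbb{F}[x]$, $A_h$ is the unital associative $\mathbb{F}$-algebra generated by $x,\hat y$ with defining relation $\hat yx-x\hat y=h$. $A_1$ is the Weyl algebra, generated by $x,y$ with $yx-xy=1$; for $h\ne0$, $x\mapsto x,\ \hat y\mapsto yh$ embeds $A_h$ into $A_1$. $\delta:\mathbb{F}[x]\to\mathbb{F}[x]$ is the derivation $\delta(f)=hf'$, where $f'$ is the formal derivative, and $\delta^p$ is its $p$-th iterate. *)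

theory Defs
  imports "HOL-Computational_Algebra.Polynomial"
begin

text \<open>The Weyl algebra A_1 over a field, realised on its standard PBW basis:
  an element is a finite sum of f_i(x) y^i (f_i in F[x]), encoded as a polynomial in y
  whose coefficients are polynomials in x (type 'a poly poly). Addition is that of
  'a poly poly; multiplication is the Weyl product determined by yx - xy = 1,
  i.e. (f y^i)(g y^j) = sum_k (i choose k) f g^(k) y^(i+j-k).\<close>

definition wmult :: "'a::idom poly poly \<Rightarrow> 'a poly poly \<Rightarrow> 'a poly poly" where
  "wmult P Q = (\<Sum>i\<le>degree P. \<Sum>j\<le>degree Q. \<Sum>k\<le>i.
      monom (coeff P i * (of_nat (i choose k) * (pderiv ^^ k) (coeff Q j))) (i + j - k))"

primrec wpow :: "'a::idom poly poly \<Rightarrow> nat \<Rightarrow> 'a poly poly" where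
  "wpow P 0 = 1"
| "wpow P (Suc n) = wmult P (wpow P n)"

definition wlistprod :: "'a::idom poly poly list \<Rightarrow> 'a poly poly" where
  "wlistprod xs = foldr wmult xs 1"

definition wC :: "'a::idom poly \<Rightarrow> 'a poly poly" where
  "wC f = [:f:]"

definition wX :: "'a::idom poly poly" where
  "wX = wC [:0, 1:]"

definition wY :: "'a::idom poly poly" where
  "wY = [:0, 1:]"

definition wYhat :: "'a::idom poly \<Rightarrow> 'a poly poly" where
  "wYhat h = wmult wY (wC h)"

inductive_set Ah :: "'a::idom poly \<Rightarrow> 'a poly poly set" for h where
  scalar: "wC [:c:] \<in> Ah h"
| genx: "wX \<in> Ah h"
| geny: "wYhat h \<in> Ah h"
| add: "a \<in> Ah h \<Longrightarrow> b \<in> Ah h \<Longrightarrow> a + b \<in> Ah h"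
| mult: "a \<in> Ah h \<Longrightarrow> b \<in> Ah h \<Longrightarrow> wmult a b \<in> Ah h"

definition center_Ah :: "'a::idom poly \<Rightarrow> 'a poly poly set" where
  "center_Ah h = {z \<in> Ah h. \<forall>a \<in> Ah h. wmult z a = wmult a z}"

text \<open>Evaluation of a bivariate polynomial Q(u,v) (encoded as 'a poly poly:
  outer variable v, inner variable u) at elements U, V of A_1:
  sum_{i,j} coeff (coeff Q i) j * U^j * V^i.\<close>
definition weval2 :: "'a::idom poly poly \<Rightarrow> 'a poly poly \<Rightarrow> 'a poly poly \<Rightarrow> 'a poly poly" where
  "weval2 Q U V = (\<Sum>i\<le>degree Q. \<Sum>j\<le>degree (coeff Q i).
      wmult (wC [:coeff (coeff Q i) j:]) (wmult (wpow U j) (wpow V i)))"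

definition hderiv :: "'a::idom poly \<Rightarrow> 'a poly \<Rightarrow> 'a poly" where
  "hderiv h f = h * pderiv f"

end

theory Submission
  imports Defs "HOL-Computational_Algebra.Primes"
begin
lemma funpow_pderiv_0[simp]: "(pderiv ^^ k) 0 = 0"
  by (induct k) auto

lemma funpow_pderiv_add: "(pderiv ^^ k) (a + b) = (pderiv ^^ k) a + (pderiv ^^ k) b"
  by (induct k) (auto simp: pderiv_add)

lemma wmult_monom:
  "wmult (monom f i) (monom g j) =
   (\<Sum>k\<le>i. monom (f * (of_nat (i choose k) * (pderiv ^^ k) g)) (i + j - k))"
proof (cases "f = 0 \<or> g = 0")
  case True then show ?thesis
    by (auto simp: wmult_def)
next
  case False
  define S where "S = (\<Sum>k\<le>i. monom (f * (of_nat (i choose k) * (pderiv ^^ k) g)) (i + j - k))"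
  have "\<And>ia ja. (\<Sum>k\<le>ia. monom (coeff (monom f i) ia * (of_nat (ia choose k) * (pderiv^^k) (coeff (monom g j) ja))) (ia+ja-k))
     = (if ia = i then (if ja = j then S else 0) else 0)"
    by (auto simp: S_def coeff_monom)
  note eq = this
  have "wmult (monom f i) (monom g j) = (\<Sum>ia\<le>i. \<Sum>ja\<le>j. if ia = i then if ja = j then S else 0 else 0)"
    unfolding wmult_def using False by (simp only: eq) (simp add: degree_monom_eq)
  also have "\<dots> = (\<Sum>ia\<le>i. if ia = i then S else 0)"
    by (intro sum.cong refl) auto
  also have "\<dots> = S" by simp
  finally show ?thesis unfolding S_def .
qed

lemma wmult_expand:
  assumes "degree P \<le> N" "degree Q \<le> M"
  shows "wmult P Q = (\<Sum>i\<le>N. \<Sum>j\<le>M. wmult (monom (coeff P i) i) (monom (coeff Q j) j))"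
proof -
  define T where "T i j = (\<Sum>k\<le>i. monom (coeff P i * (of_nat (i choose k) * (pderiv ^^ k) (coeff Q j))) (i + j - k))" for i j
  have "wmult P Q = (\<Sum>i\<le>degree P. \<Sum>j\<le>degree Q. T i j)" unfolding wmult_def T_def ..
  also have "\<dots> = (\<Sum>i\<le>N. \<Sum>j\<le>degree Q. T i j)"
    by (rule sum.mono_neutral_left) (use assms in \<open>auto simp: T_def coeff_eq_0\<close>)
  also have "\<dots> = (\<Sum>i\<le>N. \<Sum>j\<le>M. T i j)"
    by (intro sum.cong refl sum.mono_neutral_left) (use assms in \<open>auto simp: T_def coeff_eq_0\<close>)
  finally show ?thesis by (simp add: T_def wmult_monom)
qed

lemma wmult_0_left[simp]: "wmult 0 Q = 0" by (simp add: wmult_def)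
lemma wmult_0_right[simp]: "wmult P 0 = 0" by (simp add: wmult_def)

lemma wmult_monom_addL: "wmult (monom (a + b) i) (monom g j) = wmult (monom a i) (monom g j) + wmult (monom b i) (monom g j)"
  unfolding wmult_monom by (simp only: distrib_right add_monom[symmetric] sum.distrib)

lemma wmult_monom_addR: "wmult (monom f i) (monom (a + b) j) = wmult (monom f i) (monom a j) + wmult (monom f i) (monom b j)"
  unfolding wmult_monom by (simp only: funpow_pderiv_add distrib_left add_monom[symmetric] sum.distrib)

lemma wmult_add_left: "wmult (P + Q) R = wmult P R + wmult Q R"
proof -
  define N where "N = max (degree P) (degree Q)"
  have d: "degree P \<le> N" "degree Q \<le> N" "degree (P + Q) \<le> N"
    using degree_add_le_max[of P Q] by (auto simp: N_def)
  show ?thesis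
    by (simp add: wmult_expand[OF d(1) order_refl] wmult_expand[OF d(2) order_refl]
        wmult_expand[OF d(3) order_refl] wmult_monom_addL sum.distrib)
qed

lemma wmult_add_right: "wmult P (Q + R) = wmult P Q + wmult P R"
proof -
  define N where "N = max (degree Q) (degree R)"
  have d: "degree Q \<le> N" "degree R \<le> N" "degree (Q + R) \<le> N"
    using degree_add_le_max[of Q R] by (auto simp: N_def)
  show ?thesis
    by (simp add: wmult_expand[OF order_refl d(1)] wmult_expand[OF order_refl d(2)]
        wmult_expand[OF order_refl d(3)] wmult_monom_addR sum.distrib)
qed

lemma wmult_sum_left: "wmult (sum f A) R = (\<Sum>x\<in>A. wmult (f x) R)"
  by (induct A rule: infinite_finite_induct) (auto simp: wmult_add_left)

lemma wmult_sum_right: "wmult P (sum f A) = (\<Sum>x\<in>A. wmult P (f x))"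
  by (induct A rule: infinite_finite_induct) (auto simp: wmult_add_right)

definition Yop :: "'a::idom poly poly \<Rightarrow> 'a poly poly" where
  "Yop R = pCons 0 R + map_poly pderiv R"

lemma Yop_add: "Yop (P + Q) = Yop P + Yop Q"
  by (simp add: Yop_def poly_eq_iff coeff_map_poly pderiv_add coeff_pCons split: nat.split)

lemma Yop_0[simp]: "Yop 0 = 0" by (simp add: Yop_def)

lemma Yop_sum: "Yop (sum f A) = (\<Sum>x\<in>A. Yop (f x))"
  by (induct A rule: infinite_finite_induct) (auto simp: Yop_add)

lemma Yop_monom: "Yop (monom c n) = monom c (Suc n) + monom (pderiv c) n"
  by (simp add: Yop_def monom_Suc map_poly_monom)

lemma Yop_smult: "Yop (smult g X) = smult g (Yop X) + smult (pderiv g) X"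
  by (simp add: Yop_def poly_eq_iff coeff_map_poly pderiv_mult coeff_pCons algebra_simps split: nat.split)

lemma pascal_sum:
  fixes T :: "nat \<Rightarrow> nat \<Rightarrow> nat \<Rightarrow> 'b::comm_monoid_add"
  assumes add: "\<And>a b k m. T (a + b) k m = T a k m + T b k m" and z: "\<And>k m. T 0 k m = 0"
  shows "(\<Sum>k\<le>n. T (n choose k) (Suc k) (n - k) + T (n choose k) k (Suc (n - k)))
       = (\<Sum>k\<le>Suc n. T (Suc n choose k) k (Suc n - k))"
proof -
  have A: "(\<Sum>k\<le>Suc n. T (n choose k) k (Suc n - k)) = T (n choose 0) 0 (Suc n) + (\<Sum>k\<le>n. T (n choose Suc k) (Suc k) (n - k))"
    by (subst sum.atMost_Suc_shift) simp
  have B: "(\<Sum>k\<le>Suc n. T (n choose k) k (Suc n - k)) = (\<Sum>k\<le>n. T (n choose k) k (Suc (n - k)))"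
    by (simp add: z Suc_diff_le binomial_eq_0)
  have "(\<Sum>k\<le>Suc n. T (Suc n choose k) k (Suc n - k)) = T 1 0 (Suc n) + (\<Sum>k\<le>n. T (Suc n choose Suc k) (Suc k) (n - k))"
    by (subst sum.atMost_Suc_shift) simp
  also have "\<dots> = T 1 0 (Suc n) + (\<Sum>k\<le>n. T (n choose k) (Suc k) (n - k)) + (\<Sum>k\<le>n. T (n choose Suc k) (Suc k) (n - k))"
    by (simp add: add sum.distrib add_ac)
  also have "\<dots> = (\<Sum>k\<le>n. T (n choose k) (Suc k) (n - k)) + (T 1 0 (Suc n) + (\<Sum>k\<le>n. T (n choose Suc k) (Suc k) (n - k)))"
    by (simp add: add_ac)
  also have "T 1 0 (Suc n) + (\<Sum>k\<le>n. T (n choose Suc k) (Suc k) (n - k)) = (\<Sum>k\<le>n. T (n choose k) k (Suc (n - k)))"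
    using A B by simp
  finally show ?thesis by (simp add: sum.distrib)
qed

lemma Lm_monom: "wmult (monom 1 i) (monom g j) = (\<Sum>k\<le>i. monom (of_nat (i choose k) * (pderiv ^^ k) g) (i - k + j))"
  by (simp add: wmult_monom)

lemma Lm_Suc_monom: "wmult (monom 1 (Suc i)) (monom g j) = Yop (wmult (monom 1 i) (monom g j))"
proof -
  define T where "T c k m = monom (of_nat c * (pderiv ^^ k) g) (m + j)" for c k m
  have add: "\<And>a b k m. T (a + b) k m = T a k m + T b k m"
    by (simp add: T_def distrib_right add_monom)
  have "Yop (wmult (monom 1 i) (monom g j)) = (\<Sum>k\<le>i. T (i choose k) (Suc k) (i - k) + T (i choose k) k (Suc (i - k)))"
    by (simp add: Lm_monom Yop_sum Yop_monom T_def pderiv_mult add_ac)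
  also have "\<dots> = (\<Sum>k\<le>Suc i. T (Suc i choose k) k (Suc i - k))"
    by (rule pascal_sum[OF add]) (simp add: T_def)
  finally show ?thesis by (simp add: Lm_monom T_def)
qed

lemma Lm_Suc: "wmult (monom 1 (Suc i)) R = Yop (wmult (monom 1 i) R)"
  apply (subst (1 2) poly_as_sum_of_monoms[of R, symmetric])
  by (simp add: wmult_sum_right Yop_sum Lm_Suc_monom)

lemma smult_sum_right: "smult c (sum f A) = (\<Sum>x\<in>A. smult c (f x))"
  by (induct A rule: infinite_finite_induct) (auto simp: smult_add_right)

lemma wmult_1_left[simp]: "wmult 1 R = R"
proof -
  have "wmult 1 (monom g j) = monom g j" for g j
    using Lm_monom[of 0 g j] by simp
  note m = this
  show ?thesis
    by (subst (1 2) poly_as_sum_of_monoms[of R, symmetric]) (simp add: wmult_sum_right m)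
qed

lemma funpow_pderiv_1: "k > 0 \<Longrightarrow> (pderiv ^^ k) 1 = 0"
  by (cases k) (auto simp: funpow_Suc_right simp del: funpow.simps)

lemma wmult_1_right[simp]: "wmult P 1 = P"
proof -
  have "wmult (monom c i) 1 = monom c i" for c i
  proof -
    have "wmult (monom c i) (monom 1 0) = (\<Sum>k\<le>i. monom (c * (of_nat (i choose k) * (pderiv ^^ k) 1)) (i - k))"
      by (simp only: wmult_monom) simp
    also have "\<dots> = (\<Sum>k\<le>i. if k = 0 then monom c i else 0)"
      by (intro sum.cong refl) (auto simp: funpow_pderiv_1)
    finally show ?thesis by simp
  qed
  note m = this
  show ?thesis
    by (subst (1 2) poly_as_sum_of_monoms[of P, symmetric]) (simp add: wmult_sum_left m)
qed

lemma wmult_monom_left: "wmult (monom f i) R = smult f (wmult (monom 1 i) R)"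
proof -
  have "wmult (monom f i) (monom g j) = smult f (wmult (monom 1 i) (monom g j))" for g j
    by (simp only: wmult_monom) (simp add: smult_sum_right smult_monom mult_ac)
  then show ?thesis
    by (subst (1 2) poly_as_sum_of_monoms[of R, symmetric]) (simp add: wmult_sum_right smult_sum_right)
qed

lemma wmult_smult_left: "wmult (smult f P) R = smult f (wmult P R)"
proof -
  have "wmult (smult f (monom c i)) R = smult f (wmult (monom c i) R)" for c i
    by (simp only: smult_monom wmult_monom_left[of "f*c" i R] wmult_monom_left[of c i R] smult_smult)
  then show ?thesis
    by (subst (1 2) poly_as_sum_of_monoms[of P, symmetric]) (simp add: wmult_sum_left smult_sum_right)
qed

lemma wmult_Yop_left: "wmult (Yop T) R = Yop (wmult T R)"
proof -
  have "wmult (Yop (monom g j)) R = Yop (wmult (monom g j) R)" for g j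
  proof -
    have a: "wmult (monom g (Suc j)) R = smult g (Yop (wmult (monom 1 j) R))"
      by (simp only: wmult_monom_left[of g "Suc j" R] Lm_Suc)
    show ?thesis
      by (simp only: Yop_monom wmult_add_left a wmult_monom_left[of "pderiv g" j R]
        wmult_monom_left[of g j R] Yop_smult)
  qed
  then show ?thesis
    by (subst (1 2) poly_as_sum_of_monoms[of T, symmetric]) (simp add: wmult_sum_left Yop_sum)
qed

lemma Lm_assoc: "wmult (wmult (monom 1 i) Q) R = wmult (monom 1 i) (wmult Q R)"
  by (induct i) (simp_all add: Lm_Suc wmult_Yop_left)

lemma wmult_assoc: "wmult (wmult P Q) R = wmult P (wmult Q R)"
proof -
  have "wmult (wmult (monom c i) Q) R = wmult (monom c i) (wmult Q R)" for c i
    by (simp only: wmult_monom_left[of c i Q] wmult_monom_left[of c i "wmult Q R"] wmult_smult_left Lm_assoc)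
  note m = this
  show ?thesis
    by (subst (1 2) poly_as_sum_of_monoms[of P, symmetric]) (simp add: wmult_sum_left m)
qed

lemma pderiv_sum: "pderiv (sum f A) = (\<Sum>x\<in>A. pderiv (f x))"
  by (induct A rule: infinite_finite_induct) (auto simp: pderiv_add)

typedef (overloaded) ('a::idom) weyl = "UNIV :: 'a poly poly set" by auto

setup_lifting type_definition_weyl

instantiation weyl :: (idom) ring_1
begin
lift_definition zero_weyl :: "'a weyl" is 0 .
lift_definition one_weyl :: "'a weyl" is 1 .
lift_definition plus_weyl :: "'a weyl \<Rightarrow> 'a weyl \<Rightarrow> 'a weyl" is "(+)" .
lift_definition minus_weyl :: "'a weyl \<Rightarrow> 'a weyl \<Rightarrow> 'a weyl" is "(-)" .
lift_definition uminus_weyl :: "'a weyl \<Rightarrow> 'a weyl" is uminus .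
lift_definition times_weyl :: "'a weyl \<Rightarrow> 'a weyl \<Rightarrow> 'a weyl" is wmult .
instance
proof
  fix a b c :: "'a weyl"
  show "a * b * c = a * (b * c)" by transfer (rule wmult_assoc)
  show "a + b + c = a + (b + c)" by transfer (rule add.assoc)
  show "a + b = b + a" by transfer (rule add.commute)
  show "0 + a = a" by transfer simp
  show "- a + a = 0" by transfer simp
  show "a - b = a + - b" by transfer simp
  show "(a + b) * c = a * c + b * c" by transfer (rule wmult_add_left)
  show "a * (b + c) = a * b + a * c" by transfer (rule wmult_add_right)
  show "1 * a = a" by transfer simp
  show "a * 1 = a" by transfer simp
  show "(0::'a weyl) \<noteq> 1" by transfer simp
qed
end

lemma Rep_weyl_eq_iff: "a = b \<longleftrightarrow> Rep_weyl a = Rep_weyl b"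
  by (simp add: Rep_weyl_inject)

lemma Rep_add: "Rep_weyl (a + b) = Rep_weyl a + Rep_weyl b" by transfer simp
lemma Rep_diff: "Rep_weyl (a - b) = Rep_weyl a - Rep_weyl b" by transfer simp
lemma Rep_minus: "Rep_weyl (- a) = - Rep_weyl a" by transfer simp
lemma Rep_0: "Rep_weyl 0 = 0" by transfer simp
lemma Rep_1: "Rep_weyl 1 = 1" by transfer simp
lemma Rep_mult: "Rep_weyl (a * b) = wmult (Rep_weyl a) (Rep_weyl b)" by transfer simp
lemma Rep_sum: "Rep_weyl (sum f A) = (\<Sum>x\<in>A. Rep_weyl (f x))"
  by (induct A rule: infinite_finite_induct) (auto simp: Rep_add Rep_0)
lemma Rep_power: "Rep_weyl (a ^ n) = wpow (Rep_weyl a) n"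
  by (induct n) (auto simp: Rep_1 Rep_mult)
lemma Rep_of_nat: "Rep_weyl (of_nat n :: 'a::idom weyl) = of_nat n"
  by (induct n) (auto simp: Rep_1 Rep_add Rep_0)
lemma Rep_prod_list: "Rep_weyl (prod_list xs) = foldr wmult (map Rep_weyl xs) 1"
  by (induct xs) (auto simp: Rep_1 Rep_mult)
lemma Rep_Abs[simp]: "Rep_weyl (Abs_weyl P) = P"
  by (simp add: Abs_weyl_inverse)

definition Wc :: "'a::idom poly \<Rightarrow> 'a weyl" where "Wc f = Abs_weyl (wC f)"
definition Wy :: "'a::idom weyl" where "Wy = Abs_weyl wY"
definition Wx :: "'a::idom weyl" where "Wx = Wc [:0, 1:]"

lemma Rep_Wc: "Rep_weyl (Wc f) = [:f:]" by (simp add: Wc_def wC_def)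
lemma Rep_Wy: "Rep_weyl Wy = monom 1 1" by (simp add: Wy_def wY_def monom_Suc monom_0 one_pCons)

lemma wmult_const_left: "wmult [:f:] P = smult f P"
  using wmult_monom_left[of f 0 P] by (simp add: monom_0 one_pCons[symmetric])

lemma Rep_Wc_mult: "Rep_weyl (Wc f * a) = smult f (Rep_weyl a)"
  by (simp add: Rep_mult Rep_Wc wmult_const_left)

lemma funpow_pderiv_const: "pderiv g = 0 \<Longrightarrow> k > 0 \<Longrightarrow> (pderiv ^^ k) g = 0"
  by (cases k) (auto simp: funpow_Suc_right simp del: funpow.simps)

lemma wmult_monom_dconst: "pderiv g = 0 \<Longrightarrow> wmult (monom f i) (monom g j) = monom (f * g) (i + j)"
proof -
  assume g: "pderiv g = 0"
  have "wmult (monom f i) (monom g j) = (\<Sum>k\<le>i. if k = 0 then monom (f * g) (i + j) else 0)"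
    unfolding wmult_monom by (intro sum.cong refl) (auto simp: funpow_pderiv_const[OF g])
  then show ?thesis by simp
qed

lemma wmult_dconst: "pderiv g = 0 \<Longrightarrow> wmult P (monom g j) = P * monom g j"
proof -
  assume g: "pderiv g = 0"
  have "wmult P (monom g j) = (\<Sum>i\<le>degree P. wmult (monom (coeff P i) i) (monom g j))"
    by (subst (1) poly_as_sum_of_monoms[of P, symmetric]) (simp add: wmult_sum_left)
  also have "\<dots> = (\<Sum>i\<le>degree P. monom (coeff P i) i * monom g j)"
    by (simp add: wmult_monom_dconst[OF g] mult_monom)
  also have "\<dots> = P * monom g j"
    by (subst (3) poly_as_sum_of_monoms[of P, symmetric]) (simp add: sum_distrib_right)
  finally show ?thesis .
qed

lemma Rep_mult_Wy: "Rep_weyl (a * Wy) = pCons 0 (Rep_weyl a)"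
proof -
  have "Rep_weyl a * monom 1 1 = pCons 0 (Rep_weyl a)"
    by (simp add: monom_Suc monom_0 mult.commute[of _ "pCons _ _"])
  then show ?thesis using wmult_dconst[of 1 "Rep_weyl a" 1] by (simp add: Rep_mult Rep_Wy)
qed

lemma Rep_Wy_mult: "Rep_weyl (Wy * a) = Yop (Rep_weyl a)"
  using Lm_Suc[of 0 "Rep_weyl a"] by (simp add: Rep_mult Rep_Wy)

lemma Rep_mult_Wc_dconst: "pderiv g = 0 \<Longrightarrow> Rep_weyl (a * Wc g) = smult g (Rep_weyl a)"
  using wmult_dconst[of g "Rep_weyl a" 0] by (simp add: Rep_mult Rep_Wc monom_0)

lemma Rep_Wy_power: "Rep_weyl (Wy ^ n) = monom 1 n"
  by (induct n) (simp_all add: Rep_1 Rep_Wy_mult Yop_monom)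

lemma Rep_Wc_Wy_power: "Rep_weyl (Wc f * Wy ^ n) = monom f n"
  by (simp add: Rep_Wc_mult Rep_Wy_power smult_monom)

lemma weyl_decomp: "a = (\<Sum>i\<le>degree (Rep_weyl a). Wc (coeff (Rep_weyl a) i) * Wy ^ i)"
  by (simp add: Rep_weyl_eq_iff Rep_sum Rep_Wc_Wy_power poly_as_sum_of_monoms)

lemma Wc_mult: "Wc (f * g) = Wc f * Wc g"
  by (simp add: Rep_weyl_eq_iff Rep_Wc_mult Rep_Wc)
lemma Wc_add: "Wc (f + g) = Wc f + Wc g"
  by (simp add: Rep_weyl_eq_iff Rep_add Rep_Wc)
lemma Wc_diff: "Wc (f - g) = Wc f - Wc g"
  by (simp add: Rep_weyl_eq_iff Rep_diff Rep_Wc)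
lemma Wc_0[simp]: "Wc 0 = 0"
  by (simp add: Rep_weyl_eq_iff Rep_0 Rep_Wc)
lemma Wc_1[simp]: "Wc 1 = 1"
  by (simp add: Rep_weyl_eq_iff Rep_1 Rep_Wc one_pCons)
lemma Wc_power: "Wc (f ^ n) = Wc f ^ n"
  by (induct n) (simp_all add: Wc_mult)
lemma Wc_of_nat: "Wc (of_nat n) = of_nat n"
  by (induct n) (simp_all add: Wc_add)
lemma Wc_commute: "Wc f * Wc g = Wc g * Wc f"
  by (simp add: Wc_mult[symmetric] mult.commute)

lemma Wy_Wc: "Wy * Wc f = Wc f * Wy + Wc (pderiv f)"
  by (simp add: Rep_weyl_eq_iff Rep_add Rep_Wy_mult Rep_Wc_mult Rep_Wc Rep_Wy Yop_monom[of f 0, simplified monom_0]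
      monom_0 smult_monom)

lemma pderiv_x[simp]: "pderiv [:0, 1:] = 1"
  by (simp add: pderiv_pCons one_pCons)

lemma funpow_pderiv_x: "(pderiv ^^ k) [:0, 1:] = (if k = 0 then [:0, 1:] else if k = 1 then 1 else 0)"
proof (cases k)
  case (Suc m) then show ?thesis
    by (cases m) (auto simp: funpow_Suc_right pderiv_pCons funpow_pderiv_1 simp del: funpow.simps)
qed simp

lemma wmult_monom_x: "wmult (monom f i) (monom [:0, 1:] 0) = monom (f * [:0, 1:]) i + pderiv (monom f i)"
proof (cases i)
  case 0 then show ?thesis by (simp add: wmult_monom pderiv_monom)
next
  case (Suc m)
  have "wmult (monom f i) (monom [:0, 1:] 0) =
      monom (f * [:0, 1:]) i + (\<Sum>k\<le>m. if k = 0 then monom (f * of_nat (Suc m)) m else 0)"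
    unfolding wmult_monom Suc sum.atMost_Suc_shift
    by (intro arg_cong2[where f="(+)"] sum.cong refl) (auto simp: funpow_pderiv_x)
  then show ?thesis by (simp add: Suc pderiv_monom mult.commute)
qed

lemma wmult_x: "wmult P (monom [:0, 1:] 0) = smult [:0, 1:] P + pderiv P"
proof -
  have "wmult P (monom [:0, 1:] 0) = (\<Sum>i\<le>degree P. wmult (monom (coeff P i) i) (monom [:0, 1:] 0))"
    by (subst (1) poly_as_sum_of_monoms[of P, symmetric]) (simp add: wmult_sum_left)
  also have "\<dots> = (\<Sum>i\<le>degree P. smult [:0, 1:] (monom (coeff P i) i) + pderiv (monom (coeff P i) i))"
    by (simp add: wmult_monom_x smult_monom mult.commute)
  also have "\<dots> = smult [:0, 1:] P + pderiv P"
    by (subst (3 4) poly_as_sum_of_monoms[of P, symmetric])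
       (simp add: sum.distrib smult_sum_right pderiv_sum)
  finally show ?thesis .
qed

lemma Rep_comm_x: "Rep_weyl (a * Wx - Wx * a) = pderiv (Rep_weyl a)"
  by (simp add: Rep_diff Rep_mult Wx_def Rep_Wc wmult_x[simplified monom_0] wmult_const_left)

lemma Rep_comm_y: "Rep_weyl (Wy * a - a * Wy) = map_poly pderiv (Rep_weyl a)"
  by (simp add: Rep_diff Rep_Wy_mult Rep_mult_Wy Yop_def)

lemma Wc_const_commute: "Wc [:c:] * a = a * Wc [:c:]"
  by (simp add: Rep_weyl_eq_iff Rep_Wc_mult Rep_mult_Wc_dconst)

lemma commute_Wc:
  assumes "z * Wx = Wx * z"
  shows "z * Wc f = Wc f * z"
proof (induct f rule: pCons_induct)
  case 0 then show ?case by simp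
next
  case (pCons a f)
  have e: "pCons a f = [:a:] + [:0, 1:] * f" by simp
  have "z * Wc (pCons a f) = z * Wc [:a:] + (z * Wx) * Wc f"
    unfolding e Wc_add Wc_mult Wx_def[symmetric] by (simp add: distrib_left mult.assoc)
  also have "\<dots> = Wc [:a:] * z + Wx * (z * Wc f)"
    using assms by (simp add: Wc_const_commute mult.assoc)
  also have "\<dots> = Wc (pCons a f) * z"
    unfolding e Wc_add Wc_mult Wx_def[symmetric] using pCons(2) by (simp add: distrib_right mult.assoc)
  finally show ?case .
qed

lemma commute_all:
  assumes "z * Wx = Wx * z" "z * Wy = Wy * z"
  shows "z * b = b * z"
proof -
  have wy: "z * Wy ^ n = Wy ^ n * z" for n
  proof (induct n)
    case (Suc n) then show ?case by (metis power_Suc mult.assoc assms(2))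
  qed simp
  have "z * (Wc f * Wy ^ i) = (Wc f * Wy ^ i) * z" for f i
    using commute_Wc[OF assms(1)] wy by (metis mult.assoc)
  then show ?thesis
    by (subst (1 2) weyl_decomp[of b]) (simp add: sum_distrib_left sum_distrib_right)
qed

lemma comm_x_zero: "a * Wx = Wx * a \<longleftrightarrow> pderiv (Rep_weyl a) = 0"
  by (metis Rep_comm_x Rep_0 Rep_weyl_eq_iff right_minus_eq)

lemma comm_y_zero: "Wy * a = a * Wy \<longleftrightarrow> map_poly pderiv (Rep_weyl a) = 0"
  by (metis Rep_comm_y Rep_0 Rep_weyl_eq_iff right_minus_eq)

lemma coeff_wmult_const_monom:
  assumes "m \<ge> i"
  shows "coeff (wmult (monom c i) (monom g 0)) m = (if i = m then c * g else 0)"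
proof -
  have "coeff (wmult (monom c i) (monom g 0)) m =
     (\<Sum>k\<le>i. if k = 0 \<and> i = m then c * g else 0)"
    unfolding wmult_monom coeff_sum coeff_monom
    by (intro sum.cong refl) (use assms in auto)
  then show ?thesis by (simp add: sum.If_cases)
qed

lemma coeff_wmult_const:
  assumes "m \<ge> degree P"
  shows "coeff (wmult P (monom g 0)) m = coeff P m * g"
proof -
  have "coeff (wmult P (monom g 0)) m = (\<Sum>i\<le>degree P. coeff (wmult (monom (coeff P i) i) (monom g 0)) m)"
    by (subst (1) poly_as_sum_of_monoms[of P, symmetric]) (simp add: wmult_sum_left coeff_sum)
  also have "\<dots> = (\<Sum>i\<le>degree P. if i = m then coeff P i * g else 0)"
    by (intro sum.cong refl) (use assms in \<open>auto simp: coeff_wmult_const_monom\<close>)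
  also have "\<dots> = coeff P m * g"
    using assms by (auto simp: coeff_eq_0)
  finally show ?thesis .
qed

lemma degree_wmult_const: "degree (wmult P (monom g 0)) \<le> degree P"
  by (rule degree_le) (auto simp: coeff_wmult_const coeff_eq_0)

lemma Rep_mult_Wc_top:
  assumes "m \<ge> degree (Rep_weyl a)"
  shows "coeff (Rep_weyl (a * Wc g)) m = coeff (Rep_weyl a) m * g"
  using coeff_wmult_const[OF assms, of g] by (simp add: Rep_mult Rep_Wc monom_0)

lemma degree_Rep_mult_Wc: "degree (Rep_weyl (a * Wc g)) \<le> degree (Rep_weyl a)"
  using degree_wmult_const[of "Rep_weyl a" g] by (simp add: Rep_mult Rep_Wc monom_0)

lemma mult_Wc_cancel:
  fixes g :: "'a::idom poly"
  assumes "a * Wc g = 0" "g \<noteq> 0"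
  shows "a = 0"
proof (rule ccontr)
  assume "a \<noteq> 0"
  then have "Rep_weyl a \<noteq> 0" by (simp add: Rep_weyl_eq_iff Rep_0)
  then have "lead_coeff (Rep_weyl a) * g \<noteq> 0" using assms(2) by simp
  moreover have "coeff (Rep_weyl (a * Wc g)) (degree (Rep_weyl a)) = lead_coeff (Rep_weyl a) * g"
    by (rule Rep_mult_Wc_top) simp
  ultimately show False using assms(1) by (simp add: Rep_0)
qed

lemma wC_in_Ah: "wC f \<in> Ah h"
proof (induct f rule: pCons_induct)
  case 0 then show ?case using Ah.scalar[of 0 h] by (simp add: wC_def)
next
  case (pCons a f)
  have "wC (pCons a f) = wC [:a:] + wmult wX (wC f)"
    by (simp add: wC_def wX_def wmult_const_left)
  then show ?case using pCons(2) by (simp add: Ah.add Ah.scalar Ah.mult Ah.genx)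
qed

lemma Ah_Wc: "Rep_weyl (Wc f) \<in> Ah h"
  using wC_in_Ah by (simp add: Rep_Wc wC_def)
lemma Ah_add: "Rep_weyl a \<in> Ah h \<Longrightarrow> Rep_weyl b \<in> Ah h \<Longrightarrow> Rep_weyl (a + b) \<in> Ah h"
  by (simp add: Rep_add Ah.add)
lemma Ah_mult: "Rep_weyl a \<in> Ah h \<Longrightarrow> Rep_weyl b \<in> Ah h \<Longrightarrow> Rep_weyl (a * b) \<in> Ah h"
  by (simp add: Rep_mult Ah.mult)
lemma Ah_1: "Rep_weyl 1 \<in> Ah h"
  using Ah_Wc[of 1 h] by simp
lemma Ah_0: "Rep_weyl 0 \<in> Ah h"
  using Ah_Wc[of 0 h] by simp
lemma Ah_power: "Rep_weyl a \<in> Ah h \<Longrightarrow> Rep_weyl (a ^ n) \<in> Ah h"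
  by (induct n) (simp_all add: Ah_1 Ah_mult)
lemma Ah_uminus: "Rep_weyl a \<in> Ah h \<Longrightarrow> Rep_weyl (- a) \<in> Ah h"
proof -
  assume a: "Rep_weyl a \<in> Ah h"
  have "- a = Wc [:-1:] * a"
    by (simp add: Rep_weyl_eq_iff Rep_minus Rep_Wc_mult) (simp add: poly_eq_iff)
  then show ?thesis using Ah_mult[OF Ah_Wc a] by simp
qed
lemma Ah_diff: "Rep_weyl a \<in> Ah h \<Longrightarrow> Rep_weyl b \<in> Ah h \<Longrightarrow> Rep_weyl (a - b) \<in> Ah h"
  using Ah_add[of a h "- b"] Ah_uminus[of b h] by simp
lemma Ah_sum: "(\<And>x. x \<in> A \<Longrightarrow> Rep_weyl (f x) \<in> Ah h) \<Longrightarrow> Rep_weyl (sum f A) \<in> Ah h"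
  by (induct A rule: infinite_finite_induct) (auto simp: Ah_0 Ah_add)
lemma Ah_Wx: "Rep_weyl Wx \<in> Ah h"
  by (simp add: Wx_def Ah_Wc)
lemma Rep_yhat: "Rep_weyl (Wy * Wc h) = wYhat h"
  by (simp add: Rep_mult wYhat_def Wy_def Wc_def)
lemma Ah_yhat: "Rep_weyl (Wy * Wc h) \<in> Ah h"
  by (simp add: Rep_yhat Ah.geny)

definition Bset :: "'a::idom poly \<Rightarrow> 'a poly poly set" where
  "Bset h = {P. \<forall>j. h ^ j dvd coeff P j}"

lemma dvd_pderiv_pow: "h ^ m dvd g \<Longrightarrow> h ^ (m - 1) dvd pderiv g"
proof (cases m)
  case (Suc n)
  assume "h ^ m dvd g"
  then obtain q where q: "g = h ^ Suc n * q" using Suc by (auto elim: dvdE)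
  have e: "pderiv g = h ^ Suc n * pderiv q + q * (smult (of_nat (Suc n)) (h ^ n) * pderiv h)"
    unfolding q pderiv_mult pderiv_power_Suc ..
  have 1: "h ^ n dvd h ^ Suc n * pderiv q"
    by (intro dvd_mult2) (simp add: le_imp_power_dvd)
  have 2: "h ^ n dvd q * (smult (of_nat (Suc n)) (h ^ n) * pderiv h)"
    by (intro dvd_mult dvd_mult2 dvd_smult) simp
  have "h ^ n dvd pderiv g" unfolding e by (rule dvd_add[OF 1 2])
  then show ?thesis using Suc by (simp del: power_Suc)
qed simp

lemma dvd_funpow_pderiv: "h ^ j dvd d \<Longrightarrow> h ^ (j - k) dvd (pderiv ^^ k) d"
proof (induct k)
  case (Suc k)
  then have "h ^ (j - k) dvd (pderiv ^^ k) d" by simp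
  then have "h ^ (j - k - 1) dvd pderiv ((pderiv ^^ k) d)" by (rule dvd_pderiv_pow)
  moreover have "j - Suc k = j - k - 1" by simp
  ultimately show ?case by (simp only: funpow.simps comp_def)
qed simp

lemma Bset_add: "P \<in> Bset h \<Longrightarrow> Q \<in> Bset h \<Longrightarrow> P + Q \<in> Bset h"
  by (simp add: Bset_def)
lemma Bset_0: "0 \<in> Bset h" by (simp add: Bset_def)
lemma Bset_sum: "(\<And>x. x \<in> A \<Longrightarrow> f x \<in> Bset h) \<Longrightarrow> sum f A \<in> Bset h"
  by (induct A rule: infinite_finite_induct) (auto simp: Bset_0 Bset_add)
lemma Bset_monom: "h ^ n dvd c \<Longrightarrow> monom c n \<in> Bset h"
  by (simp add: Bset_def coeff_monom)

lemma Bset_wmult_monom: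
  assumes "h ^ i dvd c" "h ^ j dvd d"
  shows "wmult (monom c i) (monom d j) \<in> Bset h"
  unfolding wmult_monom
proof (rule Bset_sum, rule Bset_monom)
  fix k assume "k \<in> {..i}"
  show "h ^ (i + j - k) dvd c * (of_nat (i choose k) * (pderiv ^^ k) d)"
  proof (cases "k \<le> j")
    case True
    have "h ^ (i + j - k) = h ^ i * h ^ (j - k)" using True by (simp add: power_add[symmetric])
    moreover have "h ^ (j - k) dvd of_nat (i choose k) * (pderiv ^^ k) d"
      using dvd_funpow_pderiv[OF assms(2)] by simp
    ultimately show ?thesis using assms(1) by (simp add: mult_dvd_mono)
  next
    case False
    then have "h ^ (i + j - k) dvd h ^ i" by (simp add: le_imp_power_dvd)
    then show ?thesis using assms(1) by (meson dvd_trans dvd_mult2)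
  qed
qed

lemma Bset_wmult:
  assumes "P \<in> Bset h" "Q \<in> Bset h" shows "wmult P Q \<in> Bset h"
proof -
  have p: "h ^ i dvd coeff P i" and q: "h ^ j dvd coeff Q j" for i j
    using assms by (auto simp: Bset_def)
  show ?thesis
    using wmult_expand[OF order_refl order_refl, of P Q]
    by (metis (no_types, lifting) Bset_sum Bset_wmult_monom p q)
qed

lemma Bset_deg1:
  assumes "degree P \<le> 1" "h dvd coeff P 1"
  shows "P \<in> Bset h"
  unfolding Bset_def
proof (intro CollectI allI)
  fix j show "h ^ j dvd coeff P j"
  proof (cases "j \<le> 1")
    case True then have "j = 0 \<or> j = 1" by auto
    then show ?thesis using assms(2) by (elim disjE) simp_all
  next
    case False then have "coeff P j = 0" using assms(1) by (intro coeff_eq_0) simp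
    then show ?thesis by simp
  qed
qed

lemma Ah_Bset: "P \<in> Ah h \<Longrightarrow> P \<in> Bset h"
proof (induct rule: Ah.induct)
  case (scalar c) then show ?case by (intro Bset_deg1) (simp_all add: wC_def)
next
  case genx then show ?case by (intro Bset_deg1) (simp_all add: wX_def wC_def)
next
  case geny
  have "map_poly pderiv [:h:] = [:pderiv h:]"
    using map_poly_monom[of pderiv h 0] by (simp add: monom_0)
  then have "wYhat h = pCons 0 [:h:] + [:pderiv h:]"
    by (simp flip: Rep_yhat add: Rep_Wy_mult Rep_Wc Yop_def)
  then show ?case by (intro Bset_deg1) simp_all
next
  case (add a b) then show ?case using Bset_add by blast
next
  case (mult a b) then show ?case using Bset_wmult by blast
qed

lemma pderiv_zero_coeff:
  fixes P :: "'b::idom poly"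
  assumes "pderiv P = 0" "of_nat n \<noteq> (0::'b)"
  shows "coeff P n = 0"
proof (cases n)
  case (Suc m)
  have "of_nat n * coeff P n = 0"
    using arg_cong[OF assms(1), of "\<lambda>q. coeff q m"] by (simp add: coeff_pderiv Suc)
  then show ?thesis using assms(2) by simp
qed (use assms in simp)

lemma of_nat_poly_eq_0: "(of_nat n :: 'a::idom poly) = 0 \<longleftrightarrow> (of_nat n :: 'a) = 0"
  by (simp add: of_nat_poly)

lemma center_props:
  fixes h :: "'a::idom poly"
  assumes "Rep_weyl z \<in> center_Ah h" "h \<noteq> 0"
  shows "z * Wx = Wx * z" "Wy * z = z * Wy" "Rep_weyl z \<in> Ah h"
proof -
  have A: "Rep_weyl z \<in> Ah h" and C: "\<And>a. Rep_weyl a \<in> Ah h \<Longrightarrow> z * a = a * z"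
    using assms(1) by (auto simp: center_Ah_def Rep_weyl_eq_iff Rep_mult)
  show "Rep_weyl z \<in> Ah h" by (rule A)
  show x: "z * Wx = Wx * z" by (rule C[OF Ah_Wx])
  have ch: "z * Wc h = Wc h * z" by (rule C[OF Ah_Wc])
  have cy: "z * (Wy * Wc h) = (Wy * Wc h) * z" by (rule C[OF Ah_yhat])
  have "(Wy * z - z * Wy) * Wc h = 0"
    using ch cy by (simp add: algebra_simps)
  then have "Wy * z - z * Wy = 0" using mult_Wc_cancel assms(2) by blast
  then show "Wy * z = z * Wy" by simp
qed

lemma const_in_center: "wC [:c:] \<in> center_Ah h"
proof -
  have "wmult (wC [:c:]) a = wmult a (wC [:c:])" for a :: "'a poly poly"
    using wmult_dconst[of "[:c:]" a 0] by (simp add: wC_def wmult_const_left monom_0 mult.commute)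
  then show ?thesis by (simp add: center_Ah_def Ah.scalar)
qed

lemma center_char0:
  fixes h :: "'a::field poly"
  assumes "CHAR('a) = 0" "h \<noteq> 0"
  shows "center_Ah h = {wC [:c:] | c. True}"
proof
  show "{wC [:c:] | c. True} \<subseteq> center_Ah h" using const_in_center by blast
next
  show "center_Ah h \<subseteq> {wC [:c:] | c. True}"
  proof
    fix z0 assume z0: "z0 \<in> center_Ah h"
    define z where "z = Abs_weyl z0"
    have zr: "Rep_weyl z = z0" by (simp add: z_def)
    have cz: "z * Wx = Wx * z" "Wy * z = z * Wy"
      using center_props[of z h] z0 assms(2) zr by auto
    have px: "pderiv z0 = 0" using cz(1) comm_x_zero[of z] zr by simp
    have py: "map_poly pderiv z0 = 0" using cz(2) comm_y_zero[of z] zr by simp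
    have nz: "n > 0 \<Longrightarrow> (of_nat n :: 'a) \<noteq> 0" for n
      using assms(1) by (simp add: of_nat_eq_0_iff_char_dvd)
    have c1: "coeff z0 n = 0" if "n > 0" for n
      using pderiv_zero_coeff[OF px] nz[OF that] by (simp add: of_nat_poly_eq_0)
    have e1: "z0 = [:coeff z0 0:]"
      using c1 by (auto simp: poly_eq_iff coeff_pCons split: nat.split)
    have "pderiv (coeff z0 0) = 0"
      using arg_cong[OF py, of "\<lambda>q. coeff q 0"] by (simp add: coeff_map_poly)
    then have "coeff (coeff z0 0) n = 0" if "n > 0" for n
      using pderiv_zero_coeff nz[OF that] by blast
    then have "coeff z0 0 = [:coeff (coeff z0 0) 0:]"
      by (auto simp: poly_eq_iff coeff_pCons split: nat.split)
    with e1 have "z0 = wC [:coeff (coeff z0 0) 0:]" by (simp add: wC_def)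
    then show "z0 \<in> {wC [:c:] | c. True}" by blast
  qed
qed

lemma charp_prime:
  assumes "CHAR('a::field) = p" "p > 0" shows "prime p"
  using prime_CHAR_semidom[where 'a='a] assms by simp

lemma charp_0:
  assumes "CHAR('a::semiring_1) = p" shows "(of_nat p :: 'a) = 0"
  using assms of_nat_CHAR[where 'a='a] by simp

lemma charp_0_poly:
  assumes "CHAR('a::field) = p" shows "(of_nat p :: 'a poly) = 0"
  using charp_0[OF assms] by (simp add: of_nat_poly)

lemma charp_0_weyl:
  assumes "CHAR('a::field) = p" shows "(of_nat p :: 'a weyl) = 0"
  using charp_0[OF assms] by (simp add: Rep_weyl_eq_iff Rep_of_nat Rep_0 of_nat_poly)

lemma pderiv_pow_char:
  fixes f :: "'a::field poly"
  assumes "CHAR('a) = p" shows "pderiv (f ^ p) = 0"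
  by (simp only: pderiv_power charp_0[OF assms] smult_0_left)

lemma Wy_Wc_dconst: "pderiv g = 0 \<Longrightarrow> Wy * Wc g = Wc g * Wy"
  by (simp add: Wy_Wc)

lemma Wc_dconst_central: "pderiv g = 0 \<Longrightarrow> Wc g * b = b * Wc g"
  by (rule commute_all) (simp_all add: Wx_def Wc_commute Wy_Wc_dconst)

lemma Wyp_central:
  assumes "CHAR('a::field) = p"
  shows "(Wy :: 'a weyl) ^ p * b = b * Wy ^ p"
proof (rule commute_all)
  have "pderiv (Rep_weyl ((Wy :: 'a weyl) ^ p)) = 0"
    using charp_0_poly[OF assms] by (simp add: Rep_Wy_power pderiv_monom)
  then show "Wy ^ p * Wx = Wx * (Wy :: 'a weyl) ^ p" using comm_x_zero by blast
  show "(Wy :: 'a weyl) ^ p * Wy = Wy * Wy ^ p" by (simp add: power_commutes)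
qed

lemma prod_identity:
  fixes h :: "'a::idom poly"
  shows "Wy ^ n * Wc (h ^ n) = prod_list (map (\<lambda>i. Wy * Wc h + Wc (of_nat i * pderiv h)) [0..<n])"
proof (induct n)
  case 0 then show ?case by simp
next
  case (Suc n)
  have D: "pderiv (h ^ n) * h = of_nat n * pderiv h * h ^ n"
  proof -
    have "of_nat n * pderiv h * h ^ n = smult (of_nat n) (pderiv h * h ^ n)"
      by (simp add: of_nat_poly)
    moreover have "pderiv (h ^ n) * h = smult (of_nat n) (pderiv h * h ^ n)"
    proof (cases "n = 0")
      case False
      have "pderiv (h ^ n) * h = smult (of_nat n) (pderiv h * (h ^ (n - 1) * h))"
        by (simp add: pderiv_power mult_ac)
      moreover have "h ^ (n - 1) * h = h ^ n" using False power_minus_mult by blast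
      ultimately show ?thesis by simp
    qed simp
    ultimately show ?thesis by simp
  qed
  have sw: "Wc (h ^ n) * Wy = Wy * Wc (h ^ n) - Wc (pderiv (h ^ n))"
    by (simp add: Wy_Wc)
  have "Wy ^ n * Wc (h ^ n) * (Wy * Wc h + Wc (of_nat n * pderiv h))
     = Wy ^ n * (Wc (h ^ n) * Wy) * Wc h + Wy ^ n * Wc (h ^ n * (of_nat n * pderiv h))"
    by (simp add: distrib_left distrib_right mult.assoc Wc_mult)
  also have "\<dots> = Wy ^ Suc n * Wc (h ^ Suc n) - Wy ^ n * Wc (pderiv (h ^ n) * h)
      + Wy ^ n * Wc (h ^ n * (of_nat n * pderiv h))"
  proof -
    have "Wy ^ n * (Wy * Wc (h ^ n) - Wc (pderiv (h ^ n))) * Wc h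
        = (Wy ^ n * Wy) * (Wc (h ^ n) * Wc h) - Wy ^ n * (Wc (pderiv (h ^ n)) * Wc h)"
      by (simp add: algebra_simps)
    also have "\<dots> = Wy ^ Suc n * Wc (h ^ Suc n) - Wy ^ n * Wc (pderiv (h ^ n) * h)"
      by (simp only: power_Suc2 Wc_mult)
    finally show ?thesis unfolding sw by simp
  qed
  also have "\<dots> = Wy ^ Suc n * Wc (h ^ Suc n)"
  proof -
    have e: "h ^ n * (of_nat n * pderiv h) = of_nat n * pderiv h * h ^ n" by (simp add: mult_ac)
    show ?thesis by (simp only: D e) simp
  qed
  finally show ?case using Suc by simp
qed

definition wad :: "'b::ring \<Rightarrow> 'b \<Rightarrow> 'b" where "wad a b = a * b - b * a"

lemma power_ad_expand:
  fixes a b :: "'b::ring_1"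
  shows "a ^ n * b = (\<Sum>k\<le>n. of_nat (n choose k) * ((wad a ^^ k) b) * a ^ (n - k))"
proof (induct n)
  case 0 then show ?case by simp
next
  case (Suc n)
  define T where "T c k m = of_nat c * ((wad a ^^ k) b) * a ^ m" for c k m
  have add: "\<And>c d k m. T (c + d) k m = T c k m + T d k m"
    by (simp add: T_def distrib_right)
  have step: "a * T c k m = T c (Suc k) m + T c k (Suc m)" for c k m
    by (simp add: T_def wad_def algebra_simps mult_of_nat_commute power_commutes)
  have "a ^ Suc n * b = a * (a ^ n * b)" by (simp add: mult.assoc)
  also have "\<dots> = (\<Sum>k\<le>n. T (n choose k) (Suc k) (n - k) + T (n choose k) k (Suc (n - k)))"
    unfolding Suc T_def[symmetric] by (simp add: sum_distrib_left step)
  also have "\<dots> = (\<Sum>k\<le>Suc n. T (Suc n choose k) k (Suc n - k))"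
    by (rule pascal_sum[OF add]) (simp add: T_def)
  finally show ?case by (simp add: T_def)
qed

lemma power_ad_char:
  fixes a b :: "'a::field weyl"
  assumes "CHAR('a) = p" "p > 0"
  shows "a ^ p * b = b * a ^ p + (wad a ^^ p) b"
proof -
  have pr: "prime p" using charp_prime assms by blast
  have z: "(of_nat (p choose k) :: 'a weyl) = 0" if "0 < k" "k < p" for k
  proof -
    have "p dvd (p choose k)" using dvd_choose_prime[of k p] that pr by auto
    then have "(of_nat (p choose k) :: 'a) = 0" using assms(1) by (simp add: of_nat_eq_0_iff_char_dvd)
    then show ?thesis by (simp add: Rep_weyl_eq_iff Rep_of_nat Rep_0 of_nat_poly)
  qed
  have "a ^ p * b = (\<Sum>k\<le>p. if k = 0 then b * a ^ p else if k = p then (wad a ^^ p) b else 0)"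
    unfolding power_ad_expand by (intro sum.cong refl) (use z assms(2) in auto)
  also have "\<dots> = b * a ^ p + (wad a ^^ p) b"
    using assms(2) by (simp add: sum.If_cases Int_absorb1)
  finally show ?thesis .
qed

lemma ad_yhat_Wc: "wad (Wy * Wc h) (Wc f) = Wc (hderiv h f)"
proof -
  have sw: "Wc f * Wy = Wy * Wc f - Wc (pderiv f)" by (simp add: Wy_Wc)
  have "wad (Wy * Wc h) (Wc f) = Wy * (Wc h * Wc f) - (Wc f * Wy) * Wc h"
    by (simp add: wad_def mult.assoc)
  also have "\<dots> = Wy * (Wc h * Wc f) - Wy * (Wc f * Wc h) + Wc (pderiv f) * Wc h"
    unfolding sw by (simp add: algebra_simps)
  also have "\<dots> = Wc (hderiv h f)"
    by (simp add: Wc_commute[of h f] hderiv_def Wc_mult[symmetric] mult.commute)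
  finally show ?thesis .
qed

lemma ad_yhat_iter: "(wad (Wy * Wc h) ^^ k) (Wc f) = Wc ((hderiv h ^^ k) f)"
  by (induct k) (simp_all add: ad_yhat_Wc)

lemma Rep_yhat_explicit: "Rep_weyl (Wy * Wc h) = pCons 0 [:h:] + [:pderiv h:]"
proof -
  have "map_poly pderiv [:h:] = [:pderiv h:]"
    using map_poly_monom[of pderiv h 0] by (simp add: monom_0)
  then show ?thesis by (simp add: Rep_Wy_mult Rep_Wc Yop_def)
qed

lemma yhat_power_top:
  "degree (Rep_weyl ((Wy * Wc h) ^ n)) \<le> n \<and> coeff (Rep_weyl ((Wy * Wc h) ^ n)) n = h ^ n"
proof (induct n)
  case 0 then show ?case by (simp add: Rep_1)
next
  case (Suc n)
  define R where "R = Rep_weyl ((Wy * Wc h) ^ n)"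
  have e: "(Wy * Wc h) ^ Suc n = ((Wy * Wc h) ^ n * Wy) * Wc h"
    by (simp only: power_Suc2 mult.assoc)
  have r: "Rep_weyl ((Wy * Wc h) ^ n * Wy) = pCons 0 R" by (simp add: Rep_mult_Wy R_def)
  have d: "degree (pCons 0 R) \<le> Suc n"
    using Suc degree_pCons_le[of 0 R] unfolding R_def by linarith
  have "degree (Rep_weyl ((Wy * Wc h) ^ Suc n)) \<le> Suc n"
    unfolding e using degree_Rep_mult_Wc[of "(Wy * Wc h) ^ n * Wy" h] r d by simp
  moreover have "coeff (Rep_weyl ((Wy * Wc h) ^ Suc n)) (Suc n) = h ^ Suc n"
    unfolding e using Rep_mult_Wc_top[of "(Wy * Wc h) ^ n * Wy" "Suc n" h] r d Suc
    by (simp add: R_def mult.commute)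
  ultimately show ?case by blast
qed

lemma delta_dvd:
  assumes "p > 0" shows "h dvd (hderiv h ^^ p) [:0, 1:]"
proof -
  obtain m where "p = Suc m" using assms by (cases p) auto
  then show ?thesis by (simp add: hderiv_def)
qed

lemma V_identity:
  fixes h :: "'a::field poly"
  assumes ch: "CHAR('a) = p" and pp: "p > 0" and h: "h \<noteq> 0"
  defines "c \<equiv> (hderiv h ^^ p) [:0, 1:] div h"
  shows "Wc (h ^ p) * Wy ^ p = (Wy * Wc h) ^ p - Wc c * (Wy * Wc h)"
proof -
  define yh :: "'a weyl" where "yh = Wy * Wc h"
  define V where "V = Wc (h ^ p) * (Wy :: 'a weyl) ^ p"
  define D where "D = yh ^ p - Wc c * yh - V"
  have pr: "prime p" using charp_prime ch pp by blast
  then have p2: "p \<ge> 2" by (simp add: prime_ge_2_nat)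
  have hc: "h * c = (hderiv h ^^ p) [:0, 1:]"
    unfolding c_def by (rule dvd_mult_div_cancel[OF delta_dvd[OF pp]])
  have Vc: "V * b = b * V" for b
  proof -
    have "V * b = Wc (h ^ p) * (b * Wy ^ p)" by (simp add: V_def mult.assoc Wyp_central[OF ch])
    also have "\<dots> = (Wc (h ^ p) * b) * Wy ^ p" by (simp add: mult.assoc)
    also have "\<dots> = b * V"
      by (simp add: V_def mult.assoc Wc_dconst_central[OF pderiv_pow_char[OF ch]])
    finally show ?thesis .
  qed
  have A: "yh ^ p * Wx = Wx * yh ^ p + Wc (h * c)"
    using power_ad_char[OF ch pp, of yh Wx] by (simp add: hc yh_def Wx_def ad_yhat_iter)
  have B: "yh * Wx = Wx * yh + Wc h"
  proof -
    have "yh * Wx - Wx * yh = Wc h"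
      using ad_yhat_Wc[of h "[:0, 1:]"] by (simp add: yh_def Wx_def wad_def hderiv_def)
    then show ?thesis by (metis diff_eq_eq add.commute)
  qed
  have cx: "Wc c * Wx = Wx * Wc c" unfolding Wx_def by (rule Wc_commute)
  have "(Wc c * yh) * Wx = Wc c * (yh * Wx)" by (simp only: mult.assoc)
  also have "\<dots> = (Wc c * Wx) * yh + Wc c * Wc h" by (simp only: B distrib_left mult.assoc)
  also have "\<dots> = Wx * (Wc c * yh) + Wc (h * c)" by (simp only: cx mult.assoc Wc_mult[symmetric] mult.commute[of c h])
  finally have "(Wc c * yh) * Wx = Wx * (Wc c * yh) + Wc (h * c)" .
  then have "D * Wx = Wx * D"
    using A Vc[of Wx] by (simp add: D_def algebra_simps)
  then have pD: "pderiv (Rep_weyl D) = 0" using comm_x_zero by blast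
  have RD: "Rep_weyl D = Rep_weyl (yh ^ p) - smult c (pCons 0 [:h:] + [:pderiv h:]) - monom (h ^ p) p"
    by (simp add: D_def Rep_diff Rep_Wc_mult yh_def Rep_yhat_explicit V_def Rep_Wy_power smult_monom)
  have top: "degree (Rep_weyl (yh ^ p)) \<le> p" "coeff (Rep_weyl (yh ^ p)) p = h ^ p"
    using yhat_power_top[of h p] by (simp_all add: yh_def)
  have cz: "coeff (Rep_weyl D) n = 0" if "n > 0" for n
  proof (cases "p dvd n")
    case False
    then have "(of_nat n :: 'a) \<noteq> 0" using ch by (simp add: of_nat_eq_0_iff_char_dvd)
    then show ?thesis using pderiv_zero_coeff[OF pD] by (simp add: of_nat_poly_eq_0)
  next
    case True
    then have np: "n \<ge> p" using that by (simp add: dvd_imp_le)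
    have "coeff (Rep_weyl (yh ^ p)) n = (if n = p then h ^ p else 0)"
      using top np by (auto simp: coeff_eq_0)
    then show ?thesis using np p2 by (simp add: RD coeff_pCons split: nat.split)
  qed
  have "Rep_weyl D = [:coeff (Rep_weyl D) 0:]"
    using cz by (auto simp: poly_eq_iff coeff_pCons split: nat.split)
  then have DW: "D = Wc (coeff (Rep_weyl D) 0)" by (simp add: Rep_weyl_eq_iff Rep_Wc)
  define E where "E = yh ^ (p - 1) - Wc c - Wc (h ^ (p - 1)) * Wy ^ (p - 1)"
  have p1: "p = Suc (p - 1)" using pp by simp
  have "yh ^ p = yh ^ (p - 1) * yh" by (rule power_minus_mult[OF pp, symmetric])
  then have "yh ^ p = yh ^ (p - 1) * Wy * Wc h" by (simp only: yh_def mult.assoc)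
  moreover have "V = Wc (h ^ (p - 1)) * Wy ^ (p - 1) * Wy * Wc h"
  proof -
    have hp: "h ^ p = h ^ (p - 1) * h" by (rule power_minus_mult[OF pp, symmetric])
    have wp: "Wy ^ p = Wy ^ (p - 1) * (Wy :: 'a weyl)" by (rule power_minus_mult[OF pp, symmetric])
    have "V = Wc (h ^ (p - 1)) * (Wc h * Wy ^ p)"
      by (simp only: V_def hp Wc_mult mult.assoc)
    also have "\<dots> = Wc (h ^ (p - 1)) * (Wy ^ p * Wc h)" by (simp add: Wyp_central[OF ch])
    also have "\<dots> = Wc (h ^ (p - 1)) * Wy ^ (p - 1) * Wy * Wc h"
      by (simp only: wp mult.assoc)
    finally show ?thesis .
  qed
  ultimately have DE: "D = E * Wy * Wc h"
    by (simp add: D_def E_def yh_def algebra_simps)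
  have "E = 0"
  proof (rule ccontr)
    assume "E \<noteq> 0"
    then have RE: "Rep_weyl E \<noteq> 0" by (simp add: Rep_weyl_eq_iff Rep_0)
    define m where "m = degree (pCons 0 (Rep_weyl E))"
    have m1: "m \<ge> 1" using RE by (simp add: m_def)
    have "coeff (Rep_weyl (E * Wy * Wc h)) m = lead_coeff (pCons 0 (Rep_weyl E)) * h"
      using Rep_mult_Wc_top[of "E * Wy" m h] by (simp add: Rep_mult_Wy m_def)
    also have "\<dots> \<noteq> 0" using RE h by simp
    finally have "coeff (Rep_weyl D) m \<noteq> 0" by (simp add: DE)
    then show False using cz m1 by simp
  qed
  then have "D = 0" by (simp add: DE)
  then show ?thesis by (simp add: D_def V_def yh_def)
qed

definition spr :: "nat \<Rightarrow> 'a::comm_semiring_1 poly \<Rightarrow> 'a poly" where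
  "spr p q = (\<Sum>j\<le>degree q. monom (coeff q j) (p * j))"

lemma spr_0[simp]: "spr p 0 = 0" by (simp add: spr_def)

lemma coeff_spr:
  assumes "p > 0"
  shows "coeff (spr p q) n = (if p dvd n then coeff q (n div p) else 0)"
proof -
  have "coeff (spr p q) n = (\<Sum>j\<le>degree q. if j = n div p \<and> p dvd n then coeff q j else 0)"
    unfolding spr_def coeff_sum coeff_monom
    by (intro sum.cong refl) (use assms in auto)
  also have "\<dots> = (if p dvd n then coeff q (n div p) else 0)"
    by (auto simp: coeff_eq_0)
  finally show ?thesis .
qed

lemma monom_sum_coeff: "(\<Sum>j\<in>A. monom (f j) n) = monom (\<Sum>j\<in>A. f j) n"
  by (induct A rule: infinite_finite_induct) (auto simp: add_monom)

lemma Wx_power: "(Wx :: 'a::idom weyl) ^ n = Wc ([:0, 1:] ^ n)"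
  by (simp add: Wx_def Wc_power)

lemma Vpow:
  assumes "CHAR('a::field) = p"
  shows "(Wc g * (Wy :: 'a weyl) ^ p) ^ i = Wc (g ^ i) * Wy ^ (p * i)"
proof (induct i)
  case (Suc i)
  have "(Wc g * Wy ^ p) ^ Suc i = Wc g * (Wy ^ p * Wc (g ^ i)) * Wy ^ (p * i)"
    by (simp only: power_Suc Suc mult.assoc)
  also have "\<dots> = (Wc g * Wc (g ^ i)) * (Wy ^ p * Wy ^ (p * i))"
    by (simp only: Wyp_central[OF assms] mult.assoc)
  also have "\<dots> = Wc (g ^ Suc i) * Wy ^ (p * Suc i)"
    by (simp only: Wc_mult[symmetric] power_add[symmetric] power_Suc mult_Suc_right)
  finally show ?case .
qed simp

lemma weval2_Rep:
  "weval2 Q (Rep_weyl u) (Rep_weyl v) =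
   Rep_weyl (\<Sum>i\<le>degree Q. \<Sum>j\<le>degree (coeff Q i). Wc [:coeff (coeff Q i) j:] * (u ^ j * v ^ i))"
  by (simp add: weval2_def Rep_sum Rep_mult Rep_power Rep_Wc wC_def)

lemma weval2_formula:
  fixes h :: "'a::field poly"
  assumes ch: "CHAR('a) = p" and pp: "p > 0"
  shows "Rep_weyl (\<Sum>i\<le>degree Q. \<Sum>j\<le>degree (coeff Q i). Wc [:coeff (coeff Q i) j:] * ((Wx ^ p) ^ j * (Wc (h ^ p) * Wy ^ p) ^ i))
     = (\<Sum>i\<le>degree Q. monom (h ^ (p * i) * spr p (coeff Q i)) (p * i))"
proof -
  have t: "Rep_weyl (Wc [:c:] * ((Wx ^ p) ^ j * (Wc (h ^ p) * Wy ^ p) ^ i))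
      = monom (h ^ (p * i) * monom c (p * j)) (p * i)" for c i j
  proof -
    have "Wc [:c:] * ((Wx ^ p) ^ j * (Wc (h ^ p) * Wy ^ p) ^ i)
        = Wc ([:c:] * [:0, 1:] ^ (p * j) * h ^ (p * i)) * Wy ^ (p * i)"
    proof -
      have xp: "Wx ^ (p * j) = Wc ([:0, 1:] ^ (p * j))" by (rule Wx_power)
      show ?thesis
        by (simp only: xp Vpow[OF ch] power_mult[symmetric] Wc_mult mult.assoc)
    qed
    moreover have "[:c:] * [:0, 1:] ^ (p * j) * h ^ (p * i) = h ^ (p * i) * monom c (p * j)"
      by (simp add: monom_altdef mult.commute)
    ultimately show ?thesis by (simp add: Rep_Wc_Wy_power)
  qed
  show ?thesis
    by (simp add: Rep_sum t monom_sum_coeff sum_distrib_left[symmetric] spr_def)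
qed

lemma coeff_WE:
  assumes pp: "p > 0"
  shows "coeff (\<Sum>i\<le>degree Q. monom (h ^ (p * i) * spr p (coeff Q i)) (p * i)) n
     = (if p dvd n then h ^ n * spr p (coeff Q (n div p)) else 0)"
proof -
  have "coeff (\<Sum>i\<le>degree Q. monom (h ^ (p * i) * spr p (coeff Q i)) (p * i)) n
      = (\<Sum>i\<le>degree Q. if i = n div p \<and> p dvd n then h ^ n * spr p (coeff Q (n div p)) else 0)"
    unfolding coeff_sum coeff_monom
    by (intro sum.cong refl) (use pp in auto)
  also have "\<dots> = (if p dvd n then h ^ n * spr p (coeff Q (n div p)) else 0)"
    by (auto simp: coeff_eq_0)
  finally show ?thesis .
qed

lemma V_central:
  assumes ch: "CHAR('a::field) = p"
  shows "(Wc (h ^ p) * (Wy :: 'a weyl) ^ p) * b = b * (Wc (h ^ p) * Wy ^ p)"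
proof -
  have "(Wc (h ^ p) * Wy ^ p) * b = Wc (h ^ p) * (b * Wy ^ p)" by (simp add: mult.assoc Wyp_central[OF ch])
  also have "\<dots> = (Wc (h ^ p) * b) * Wy ^ p" by (simp add: mult.assoc)
  also have "\<dots> = b * (Wc (h ^ p) * Wy ^ p)"
    by (simp add: mult.assoc Wc_dconst_central[OF pderiv_pow_char[OF ch]])
  finally show ?thesis .
qed

lemma sum_central:
  fixes f :: "'c \<Rightarrow> 'b::ring"
  shows "(\<And>x. x \<in> A \<Longrightarrow> f x * b = b * f x) \<Longrightarrow> sum f A * b = b * sum f A"
  unfolding sum_distrib_left sum_distrib_right by (rule sum.cong) auto

lemma prod_central: "x * b = b * x \<Longrightarrow> y * b = b * y \<Longrightarrow> (x * y) * b = b * (x * (y :: 'b::ring))"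
  by (metis mult.assoc)

lemma pow_central: "x * b = b * x \<Longrightarrow> x ^ n * b = b * (x ^ n :: 'b::ring_1)"
proof (induct n)
  case (Suc n) then show ?case by (metis mult.assoc power_Suc)
qed simp

lemma center_from_weyl:
  assumes "Rep_weyl w \<in> Ah h" "\<And>b. w * b = b * w"
  shows "Rep_weyl w \<in> center_Ah h"
proof -
  have "wmult (Rep_weyl w) a = wmult a (Rep_weyl w)" for a
  proof -
    have "Rep_weyl (w * Abs_weyl a) = Rep_weyl (Abs_weyl a * w)" using assms(2) by simp
    then show ?thesis by (simp add: Rep_mult)
  qed
  then show ?thesis using assms(1) by (simp add: center_Ah_def)
qed

lemma weval2_in_center:
  fixes h :: "'a::field poly"
  assumes ch: "CHAR('a) = p" and pp: "p > 0" and h: "h \<noteq> 0"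
  shows "weval2 Q (Rep_weyl (Wx ^ p)) (Rep_weyl (Wc (h ^ p) * (Wy :: 'a weyl) ^ p)) \<in> center_Ah h"
proof -
  define u :: "'a weyl" where "u = Wx ^ p"
  define v :: "'a weyl" where "v = Wc (h ^ p) * Wy ^ p"
  have uA: "Rep_weyl u \<in> Ah h" unfolding u_def by (intro Ah_power Ah_Wx)
  have vA: "Rep_weyl v \<in> Ah h"
    unfolding v_def V_identity[OF ch pp h]
    by (intro Ah_diff Ah_power Ah_yhat Ah_mult Ah_Wc)
  have uc: "u * b = b * u" for b
  proof -
    have "pderiv ([:0, 1:] ^ p :: 'a poly) = 0" by (rule pderiv_pow_char[OF ch])
    then show ?thesis unfolding u_def Wx_power by (rule Wc_dconst_central)
  qed
  have vc: "v * b = b * v" for b unfolding v_def by (rule V_central[OF ch])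
  have cc: "Wc [:c:] * b = b * Wc [:c:]" for c b by (rule Wc_const_commute)
  define w where "w = (\<Sum>i\<le>degree Q. \<Sum>j\<le>degree (coeff Q i). Wc [:coeff (coeff Q i) j:] * (u ^ j * v ^ i))"
  have "Rep_weyl w \<in> Ah h"
    unfolding w_def by (intro Ah_sum Ah_mult Ah_Wc Ah_power uA vA)
  moreover have "w * b = b * w" for b
    unfolding w_def
    by (intro sum_central prod_central cc pow_central uc vc)
  ultimately have "Rep_weyl w \<in> center_Ah h" by (rule center_from_weyl)
  then show ?thesis by (simp add: weval2_Rep w_def u_def v_def)
qed

lemma weval2_WE:
  fixes h :: "'a::field poly"
  assumes ch: "CHAR('a) = p" and pp: "p > 0"
  shows "weval2 Q (Rep_weyl (Wx ^ p)) (Rep_weyl (Wc (h ^ p) * (Wy :: 'a weyl) ^ p))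
       = (\<Sum>i\<le>degree Q. monom (h ^ (p * i) * spr p (coeff Q i)) (p * i))"
  by (simp only: weval2_Rep weval2_formula[OF ch pp])

lemma weval2_indep:
  fixes h :: "'a::field poly"
  assumes ch: "CHAR('a) = p" and pp: "p > 0" and h: "h \<noteq> 0"
    and z: "weval2 Q (Rep_weyl (Wx ^ p)) (Rep_weyl (Wc (h ^ p) * (Wy :: 'a weyl) ^ p)) = 0"
  shows "Q = 0"
proof -
  have "coeff Q i = 0" for i
  proof -
    have "coeff (\<Sum>i\<le>degree Q. monom (h ^ (p * i) * spr p (coeff Q i)) (p * i)) (p * i) = 0"
      using z by (simp add: weval2_WE[OF ch pp])
    then have "h ^ (p * i) * spr p (coeff Q i) = 0" using pp by (simp add: coeff_WE)
    then have s: "spr p (coeff Q i) = 0" using h by simp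
    have "coeff (coeff Q i) j = 0" for j
      using arg_cong[OF s, of "\<lambda>q. coeff q (p * j)"] pp by (simp add: coeff_spr)
    then show ?thesis by (simp add: poly_eq_iff)
  qed
  then show ?thesis by (simp add: poly_eq_iff)
qed

lemma center_charp_sub:
  fixes h :: "'a::field poly"
  assumes ch: "CHAR('a) = p" and pp: "p > 0" and h: "h \<noteq> 0"
    and z0: "z0 \<in> center_Ah h"
  shows "\<exists>Q. z0 = weval2 Q (Rep_weyl (Wx ^ p)) (Rep_weyl (Wc (h ^ p) * (Wy :: 'a weyl) ^ p))"
proof -
  define z :: "'a weyl" where "z = Abs_weyl z0"
  have zr: "Rep_weyl z = z0" by (simp add: z_def)
  have cz: "z * Wx = Wx * z" "Wy * z = z * Wy" "z0 \<in> Ah h"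
    using center_props[of z h] z0 h zr by auto
  have px: "pderiv z0 = 0" using cz(1) comm_x_zero[of z] zr by simp
  have py: "map_poly pderiv z0 = 0" using cz(2) comm_y_zero[of z] zr by simp
  have B: "h ^ n dvd coeff z0 n" for n using Ah_Bset[OF cz(3)] by (simp add: Bset_def)
  have ndvd: "(of_nat n :: 'a) \<noteq> 0" if "\<not> p dvd n" for n
    using that ch by (simp add: of_nat_eq_0_iff_char_dvd)
  have c1: "coeff z0 n = 0" if "\<not> p dvd n" for n
    using pderiv_zero_coeff[OF px] ndvd[OF that] by (simp add: of_nat_poly_eq_0)
  have pc: "pderiv (coeff z0 n) = 0" for n
    using arg_cong[OF py, of "\<lambda>q. coeff q n"] by (simp add: coeff_map_poly)
  define b where "b i = coeff z0 (p * i) div h ^ (p * i)" for i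
  have hb: "coeff z0 (p * i) = h ^ (p * i) * b i" for i
    unfolding b_def using B[of "p * i"] by simp
  have pb: "pderiv (b i) = 0" for i
  proof -
    have hp: "pderiv (h ^ (p * i)) = 0"
      using pderiv_pow_char[OF ch, of "h ^ i"] by (simp add: power_mult[symmetric] mult.commute)
    have "pderiv (coeff z0 (p * i)) = h ^ (p * i) * pderiv (b i)"
      unfolding hb by (simp add: pderiv_mult hp)
    then have "h ^ (p * i) * pderiv (b i) = 0" using pc by simp
    then show ?thesis using h by simp
  qed
  have cb: "coeff (b i) n = 0" if "\<not> p dvd n" for i n
    using pderiv_zero_coeff[OF pb] ndvd[OF that] by blast
  define q where "q i = (\<Sum>j\<le>degree (b i). monom (coeff (b i) (p * j)) j)" for i
  have cq: "coeff (q i) m = coeff (b i) (p * m)" for i m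
  proof -
    have "coeff (q i) m = (if m \<le> degree (b i) then coeff (b i) (p * m) else 0)"
      unfolding q_def coeff_sum coeff_monom by (simp add: sum.If_cases)
    also have "\<dots> = coeff (b i) (p * m)"
    proof -
      have mm: "m \<le> p * m" using pp by simp
      have "m > degree (b i) \<Longrightarrow> coeff (b i) (p * m) = 0"
        by (rule coeff_eq_0) (use mm in linarith)
      then show ?thesis by auto
    qed
    finally show ?thesis .
  qed
  have sq: "spr p (q i) = b i" for i
    by (auto simp: poly_eq_iff coeff_spr[OF pp] cq cb)
  define Q where "Q = (\<Sum>i\<le>degree z0. monom (q i) i)"
  have cQ: "coeff Q i = (if i \<le> degree z0 then q i else 0)" for i
    unfolding Q_def coeff_sum coeff_monom by (simp add: sum.If_cases)
  have "z0 = (\<Sum>i\<le>degree Q. monom (h ^ (p * i) * spr p (coeff Q i)) (p * i))"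
  proof (rule poly_eqI)
    fix n
    show "coeff z0 n = coeff (\<Sum>i\<le>degree Q. monom (h ^ (p * i) * spr p (coeff Q i)) (p * i)) n"
    proof (cases "p dvd n")
      case False then show ?thesis unfolding coeff_WE[OF pp] by (simp add: c1)
    next
      case True
      then obtain i where n: "n = p * i" by (auto elim: dvdE)
      show ?thesis
      proof (cases "i \<le> degree z0")
        case True then show ?thesis unfolding coeff_WE[OF pp] using pp by (simp add: n cQ sq hb)
      next
        case False
        have "i \<le> p * i" using pp by simp
        then have "degree z0 < n" using False unfolding n by linarith
        then have "coeff z0 n = 0" by (rule coeff_eq_0)
        then show ?thesis unfolding coeff_WE[OF pp] using False pp by (simp add: n cQ)
      qed
    qed
  qed
  then show ?thesis using weval2_WE[OF ch pp, of Q h] by (intro exI[of _ Q]) simp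
qed

theorem theorem5p3:
  fixes h :: "'a::field poly"
  assumes "h \<noteq> 0"
  shows "(CHAR('a) = 0 \<longrightarrow> center_Ah h = {wC [:c:] | c. True})
       \<and> (\<forall>p. CHAR('a) = p \<and> p > 0 \<longrightarrow>
           (let U = wpow wX p; V = wmult (wC (h ^ p)) (wpow wY p) in
              (\<forall>Q. weval2 Q U V = 0 \<longrightarrow> Q = 0)
            \<and> center_Ah h = {weval2 Q U V | Q. True}
            \<and> h dvd (hderiv h ^^ p) [:0, 1:]
            \<and> V = wmult (wpow wY p) (wC (h ^ p))
            \<and> V = wlistprod (map (\<lambda>i. wYhat h + wC (of_nat i * pderiv h)) [0..<p])
            \<and> V = wpow (wYhat h) p - wmult (wC ((hderiv h ^^ p) [:0, 1:] div h)) (wYhat h)))"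
proof -
  have Rx: "wX = Rep_weyl (Wx :: 'a weyl)" by (simp add: Wx_def Rep_Wc wX_def wC_def)
  have Ry: "wY = Rep_weyl (Wy :: 'a weyl)" by (simp add: Wy_def)
  have RC: "wC f = Rep_weyl (Wc f)" for f :: "'a poly" by (simp add: Rep_Wc wC_def)
  show ?thesis
  proof (intro conjI impI allI)
    assume "CHAR('a) = 0"
    then show "center_Ah h = {wC [:c:] | c. True}" using center_char0 assms by blast
  next
    fix p assume "CHAR('a) = p \<and> p > 0"
    then have ch: "CHAR('a) = p" and pp: "p > 0" by auto
    have U: "wpow wX p = Rep_weyl ((Wx :: 'a weyl) ^ p)" by (simp add: Rx Rep_power)
    have V: "wmult (wC (h ^ p)) (wpow wY p) = Rep_weyl (Wc (h ^ p) * (Wy :: 'a weyl) ^ p)"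
      by (simp add: Ry RC Rep_power Rep_mult)
    have V2: "wmult (wpow wY p) (wC (h ^ p)) = Rep_weyl (Wc (h ^ p) * (Wy :: 'a weyl) ^ p)"
    proof -
      have "Rep_weyl ((Wy :: 'a weyl) ^ p * Wc (h ^ p)) = Rep_weyl (Wc (h ^ p) * (Wy :: 'a weyl) ^ p)"
        by (simp add: Wyp_central[OF ch])
      then show ?thesis by (simp add: Ry RC Rep_power Rep_mult)
    qed
    have V3: "wlistprod (map (\<lambda>i. wYhat h + wC (of_nat i * pderiv h)) [0..<p])
        = Rep_weyl (Wc (h ^ p) * (Wy :: 'a weyl) ^ p)"
    proof -
      have m: "map Rep_weyl (map (\<lambda>i. Wy * Wc h + Wc (of_nat i * pderiv h)) [0..<p])
          = map (\<lambda>i. wYhat h + wC (of_nat i * pderiv h)) [0..<p]"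
        by (simp add: Rep_add Rep_yhat RC[symmetric])
      have "wlistprod (map (\<lambda>i. wYhat h + wC (of_nat i * pderiv h)) [0..<p])
          = Rep_weyl (prod_list (map (\<lambda>i. Wy * Wc h + Wc (of_nat i * pderiv h)) [0..<p]))"
        unfolding wlistprod_def Rep_prod_list m ..
      also have "\<dots> = Rep_weyl (Wy ^ p * Wc (h ^ p))" by (simp only: prod_identity)
      finally show ?thesis by (simp add: Wyp_central[OF ch])
    qed
    have V4: "wpow (wYhat h) p - wmult (wC ((hderiv h ^^ p) [:0, 1:] div h)) (wYhat h)
        = Rep_weyl (Wc (h ^ p) * (Wy :: 'a weyl) ^ p)"
      by (simp add: V_identity[OF ch pp assms] Rep_diff Rep_power Rep_mult Rep_yhat[symmetric] RC)
    have C: "center_Ah h = {weval2 Q (Rep_weyl ((Wx :: 'a weyl) ^ p)) (Rep_weyl (Wc (h ^ p) * (Wy :: 'a weyl) ^ p)) | Q. True}"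
      using center_charp_sub[OF ch pp assms] weval2_in_center[OF ch pp assms] by blast
    show "let U = wpow wX p; V = wmult (wC (h ^ p)) (wpow wY p) in
              (\<forall>Q. weval2 Q U V = 0 \<longrightarrow> Q = 0)
            \<and> center_Ah h = {weval2 Q U V | Q. True}
            \<and> h dvd (hderiv h ^^ p) [:0, 1:]
            \<and> V = wmult (wpow wY p) (wC (h ^ p))
            \<and> V = wlistprod (map (\<lambda>i. wYhat h + wC (of_nat i * pderiv h)) [0..<p])
            \<and> V = wpow (wYhat h) p - wmult (wC ((hderiv h ^^ p) [:0, 1:] div h)) (wYhat h)"
      unfolding Let_def U V V2 V3 V4
      using weval2_indep[OF ch pp assms] C delta_dvd[OF pp, of h] by blast
  qed
qed

end
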